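(* Let $G=(V,E)$ be a (directed) graph with positive edge weights $w$ and source $s$ from which every vertex is reachable, with no two vertices equidistant from $s$. Run Dijkstra's algorithm on $(G,s,w)$ and, for each $x_i\in V\setminus\{s\}$, let $[a_i,b_i]$ be its timestamp interval. For each $x_i\in V\setminus\{s\}$ choose a real value $r_i\in[a_i,b_i]$. If all $r_i$ are distinct, then the sequence $L$ ordering all $x_i$ by $r_i$ is a linearization of $(G,s)$.
   Context: Dijkstra's algorithm with a min-heap $H$: set distance$[v]=\infty$ for all $v$, distance$[s]=0$, push $s$ with key $0$. While $H$ is nonempty: pop the minimum $u$, append it to the output, and for each edge $(u,v)$: if distance$[v]=\infty$, set distance$[v]=$distance$[u]+w(u,v)$ and push $v$ with that key; else if $v\in H$ and distance$[v]>$distance$[u]+w(u,v)$, update distance$[v]$ and decrease its key. Time is a counter, initially $0$, incremented after every \textsc{Push}; $a_i$ and $b_i$ are the times $x_i$ is pushed and popped. A linearization of $(G,s)$ is a permutation $L$ of $V\setminus\{s\}$ such that for some edge weighting $w'$ of $G$, $L$ is the order of the vertices of $V\setminus\{s\}$ by their shortest-path distance from $s$ under $w'$. *)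

theory Defs
  imports Complex_Main
begin

definition walk :: "('v \<times> 'v) set \<Rightarrow> 'v list \<Rightarrow> bool" where
  "walk E p = (p \<noteq> [] \<and> successively (\<lambda>x y. (x, y) \<in> E) p)"

definition walk_weight :: "('v \<Rightarrow> 'v \<Rightarrow> real) \<Rightarrow> 'v list \<Rightarrow> real" where
  "walk_weight w p = sum_list (map (\<lambda>(x, y). w x y) (zip p (tl p)))"

definition sp_dist :: "('v \<times> 'v) set \<Rightarrow> ('v \<Rightarrow> 'v \<Rightarrow> real) \<Rightarrow> 'v \<Rightarrow> 'v \<Rightarrow> real" where
  "sp_dist E w s v = Inf {walk_weight w p | p. walk E p \<and> hd p = s \<and> last p = v}"

definition is_linearization :: "'v set \<Rightarrow> ('v \<times> 'v) set \<Rightarrow> 'v \<Rightarrow> 'v list \<Rightarrow> bool" where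
  "is_linearization V E s L =
     (set L = V - {s} \<and> distinct L \<and>
      (\<exists>w'. (\<forall>(u, v) \<in> E. 0 < w' u v) \<and>
            sorted_wrt (\<lambda>x y. sp_dist E w' s x < sp_dist E w' s y) L))"

(* State of Dijkstra's algorithm.  ds_dist v = None means distance[v] = \<infinity>;
   the heap key of v \<in> ds_heap is its current distance. *)
record 'v dstate =
  ds_dist :: "'v \<Rightarrow> real option"
  ds_heap :: "'v set"
  ds_out  :: "'v list"
  ds_time :: nat
  ds_push :: "'v \<Rightarrow> nat"   (* a_i: time at which vertex was pushed *)
  ds_pop  :: "'v \<Rightarrow> nat"   (* b_i: time at which vertex was popped *)

definition relax :: "('v \<Rightarrow> 'v \<Rightarrow> real) \<Rightarrow> 'v \<Rightarrow> 'v \<Rightarrow> 'v dstate \<Rightarrow> 'v dstate" where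
  "relax w u v S =
    (let nd = the (ds_dist S u) + w u v in
     case ds_dist S v of
       None \<Rightarrow> S\<lparr>ds_dist := (ds_dist S)(v := Some nd),
                  ds_heap := insert v (ds_heap S),
                  ds_push := (ds_push S)(v := ds_time S),
                  ds_time := Suc (ds_time S)\<rparr>
     | Some dv \<Rightarrow> (if v \<in> ds_heap S \<and> nd < dv
                   then S\<lparr>ds_dist := (ds_dist S)(v := Some nd)\<rparr> else S))"

definition dijkstra_init :: "'v \<Rightarrow> 'v dstate" where
  "dijkstra_init s =
    \<lparr>ds_dist = (\<lambda>_. None)(s := Some 0), ds_heap = {s}, ds_out = [], ds_time = 1,
     ds_push = (\<lambda>_. 0), ds_pop = (\<lambda>_. 0)\<rparr>"

definition dijkstra_step ::
  "('v \<Rightarrow> 'v \<Rightarrow> real) \<Rightarrow> ('v \<Rightarrow> 'v list) \<Rightarrow> 'v dstate \<Rightarrow> 'v dstate \<Rightarrow> bool" where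
  "dijkstra_step w adj S S' =
    (\<exists>u \<in> ds_heap S. (\<forall>v \<in> ds_heap S. the (ds_dist S u) \<le> the (ds_dist S v)) \<and>
       S' = fold (relax w u) (adj u)
              (S\<lparr>ds_heap := ds_heap S - {u}, ds_out := ds_out S @ [u],
                 ds_pop := (ds_pop S)(u := ds_time S)\<rparr>))"

definition valid_adj :: "('v \<times> 'v) set \<Rightarrow> ('v \<Rightarrow> 'v list) \<Rightarrow> bool" where
  "valid_adj E adj = (\<forall>u. distinct (adj u) \<and> set (adj u) = {v. (u, v) \<in> E})"

end

theory Submission
  imports Defs
begin

definition inv0 :: "('v \<times> 'v) set \<Rightarrow> 'v \<Rightarrow> 'v set \<Rightarrow> 'v dstate \<Rightarrow> bool" where
"inv0 E s X S \<longleftrightarrow> ds_dist S s \<noteq> None \<and> (\<forall>x\<in>ds_heap S. ds_dist S x \<noteq> None) \<and>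
 (\<forall>x y. ds_dist S x \<noteq> None \<and> x \<notin> ds_heap S \<and> x \<notin> X \<and> (x,y)\<in>E \<longrightarrow> ds_dist S y \<noteq> None) \<and>
 (\<forall>v. v\<noteq>s \<and> ds_dist S v \<noteq> None \<longrightarrow> (\<exists>p. (p,v)\<in>E \<and> p\<noteq>v \<and> ds_dist S p \<noteq> None \<and> p \<notin> ds_heap S
      \<and> (p = s \<or> ds_pop S p \<le> ds_push S v))) \<and>
 1 \<le> ds_time S \<and> (\<forall>v. v\<noteq>s \<and> ds_dist S v \<noteq> None \<longrightarrow> 1 \<le> ds_push S v)"

lemma relax_inv:
  assumes "inv0 E s {u} S" "(u,v)\<in>E" "ds_dist S u \<noteq> None" "u \<notin> ds_heap S" "ds_pop S u \<le> ds_time S"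
  shows "inv0 E s {u} (relax w u v S) \<and> ds_dist (relax w u v S) u \<noteq> None \<and> u \<notin> ds_heap (relax w u v S)
     \<and> ds_pop (relax w u v S) u \<le> ds_time (relax w u v S) \<and> ds_dist (relax w u v S) v \<noteq> None
     \<and> (\<forall>x. ds_dist S x \<noteq> None \<longrightarrow> ds_dist (relax w u v S) x \<noteq> None)"
proof (cases "ds_dist S v")
  case None
  have uv: "u \<noteq> v" using None assms(3) by auto
  have vs: "v \<noteq> s" using None assms(1) unfolding inv0_def by auto
  define T where "T = relax w u v S"
  have T: "ds_dist T = (ds_dist S)(v := Some (the (ds_dist S u) + w u v))"
    "ds_heap T = insert v (ds_heap S)" "ds_push T = (ds_push S)(v := ds_time S)"
    "ds_time T = Suc (ds_time S)" "ds_pop T = ds_pop S"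
    using None unfolding T_def relax_def Let_def by auto
  have I: "ds_dist S s \<noteq> None" "\<forall>x\<in>ds_heap S. ds_dist S x \<noteq> None"
    "\<forall>x y. ds_dist S x \<noteq> None \<and> x \<notin> ds_heap S \<and> x \<notin> {u} \<and> (x,y)\<in>E \<longrightarrow> ds_dist S y \<noteq> None"
    "\<forall>v. v\<noteq>s \<and> ds_dist S v \<noteq> None \<longrightarrow> (\<exists>p. (p,v)\<in>E \<and> p\<noteq>v \<and> ds_dist S p \<noteq> None \<and> p \<notin> ds_heap S
      \<and> (p = s \<or> ds_pop S p \<le> ds_push S v))"
    "1 \<le> ds_time S" "\<forall>v. v\<noteq>s \<and> ds_dist S v \<noteq> None \<longrightarrow> 1 \<le> ds_push S v"
    using assms(1) unfolding inv0_def by blast+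
  have "inv0 E s {u} T"
    unfolding inv0_def
  proof (intro conjI)
    show "ds_dist T s \<noteq> None" using I(1) T by simp
    show "\<forall>x\<in>ds_heap T. ds_dist T x \<noteq> None" using I(2) T by simp
    show "\<forall>x y. ds_dist T x \<noteq> None \<and> x \<notin> ds_heap T \<and> x \<notin> {u} \<and> (x,y)\<in>E \<longrightarrow> ds_dist T y \<noteq> None"
      using I(3) T by simp
    show "\<forall>x. x\<noteq>s \<and> ds_dist T x \<noteq> None \<longrightarrow> (\<exists>p. (p,x)\<in>E \<and> p\<noteq>x \<and> ds_dist T p \<noteq> None \<and> p \<notin> ds_heap T
      \<and> (p = s \<or> ds_pop T p \<le> ds_push T x))"
    proof (intro allI impI)
      fix x assume x: "x\<noteq>s \<and> ds_dist T x \<noteq> None"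
      show "\<exists>p. (p,x)\<in>E \<and> p\<noteq>x \<and> ds_dist T p \<noteq> None \<and> p \<notin> ds_heap T
      \<and> (p = s \<or> ds_pop T p \<le> ds_push T x)"
      proof (cases "x = v")
        case True
        then show ?thesis using assms uv T by (intro exI[of _ u]) auto
      next
        case False
        then have "ds_dist S x \<noteq> None" using x T by simp
        then obtain p where p: "(p,x)\<in>E \<and> p\<noteq>x \<and> ds_dist S p \<noteq> None \<and> p \<notin> ds_heap S
          \<and> (p = s \<or> ds_pop S p \<le> ds_push S x)" using I(4) x by blast
        have "p \<noteq> v" using p None by auto
        then show ?thesis using p False T by (intro exI[of _ p]) auto
      qed
    qed
    show "1 \<le> ds_time T" using T by simp
    show "\<forall>x. x\<noteq>s \<and> ds_dist T x \<noteq> None \<longrightarrow> 1 \<le> ds_push T x" using I(5,6) T by simp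
  qed
  then show ?thesis using assms T uv unfolding T_def[symmetric] by auto
next
  case (Some dv)
  show ?thesis
  proof (cases "v \<in> ds_heap S \<and> the (ds_dist S u) + w u v < dv")
    case True
    define T where "T = relax w u v S"
    have T: "T = S\<lparr>ds_dist := (ds_dist S)(v := Some (the (ds_dist S u) + w u v))\<rparr>"
      using Some True unfolding T_def relax_def Let_def by auto
    have D: "\<And>x. (ds_dist T x \<noteq> None) = (ds_dist S x \<noteq> None)" using Some unfolding T by auto
    have F: "ds_heap T = ds_heap S" "ds_pop T = ds_pop S" "ds_push T = ds_push S" "ds_time T = ds_time S"
      unfolding T by auto
    have "inv0 E s {u} T" using assms(1) unfolding inv0_def D F .
    then show ?thesis using assms T Some unfolding T_def[symmetric] by auto
  next
    case False
    then have "relax w u v S = S" using Some unfolding relax_def Let_def by auto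
    then show ?thesis using assms Some by auto
  qed
qed

lemma fold_inv:
  assumes "inv0 E s {u} S" "set xs \<subseteq> {v. (u,v)\<in>E}" "ds_dist S u \<noteq> None" "u \<notin> ds_heap S"
    "ds_pop S u \<le> ds_time S"
  shows "inv0 E s {u} (fold (relax w u) xs S) \<and> ds_dist (fold (relax w u) xs S) u \<noteq> None
     \<and> u \<notin> ds_heap (fold (relax w u) xs S)
     \<and> ds_pop (fold (relax w u) xs S) u \<le> ds_time (fold (relax w u) xs S)
     \<and> (\<forall>v\<in>set xs. ds_dist (fold (relax w u) xs S) v \<noteq> None)
     \<and> (\<forall>x. ds_dist S x \<noteq> None \<longrightarrow> ds_dist (fold (relax w u) xs S) x \<noteq> None)"
  using assms
proof (induction xs arbitrary: S)
  case Nil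
  then show ?case by simp
next
  case (Cons a xs)
  have R: "inv0 E s {u} (relax w u a S) \<and> ds_dist (relax w u a S) u \<noteq> None \<and> u \<notin> ds_heap (relax w u a S)
     \<and> ds_pop (relax w u a S) u \<le> ds_time (relax w u a S) \<and> ds_dist (relax w u a S) a \<noteq> None
     \<and> (\<forall>x. ds_dist S x \<noteq> None \<longrightarrow> ds_dist (relax w u a S) x \<noteq> None)"
    using relax_inv[of E s u S a w] Cons.prems by auto
  have "set xs \<subseteq> {v. (u,v)\<in>E}" using Cons.prems by auto
  then have IH: "inv0 E s {u} (fold (relax w u) xs (relax w u a S)) \<and> ds_dist (fold (relax w u) xs (relax w u a S)) u \<noteq> None
     \<and> u \<notin> ds_heap (fold (relax w u) xs (relax w u a S))
     \<and> ds_pop (fold (relax w u) xs (relax w u a S)) u \<le> ds_time (fold (relax w u) xs (relax w u a S))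
     \<and> (\<forall>v\<in>set xs. ds_dist (fold (relax w u) xs (relax w u a S)) v \<noteq> None)
     \<and> (\<forall>x. ds_dist (relax w u a S) x \<noteq> None \<longrightarrow> ds_dist (fold (relax w u) xs (relax w u a S)) x \<noteq> None)"
    using Cons.IH R by blast
  show ?case using IH R by simp
qed

lemma step_inv:
  assumes "inv0 E s {} S" "dijkstra_step w adj S S'" "valid_adj E adj"
  shows "inv0 E s {} S'"
proof -
  obtain u where u: "u \<in> ds_heap S" and S': "S' = fold (relax w u) (adj u)
              (S\<lparr>ds_heap := ds_heap S - {u}, ds_out := ds_out S @ [u],
                 ds_pop := (ds_pop S)(u := ds_time S)\<rparr>)"
    using assms(2) unfolding dijkstra_step_def by blast
  define S1 where "S1 = S\<lparr>ds_heap := ds_heap S - {u}, ds_out := ds_out S @ [u],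
                 ds_pop := (ds_pop S)(u := ds_time S)\<rparr>"
  have F: "ds_dist S1 = ds_dist S" "ds_heap S1 = ds_heap S - {u}" "ds_pop S1 = (ds_pop S)(u := ds_time S)"
    "ds_push S1 = ds_push S" "ds_time S1 = ds_time S" unfolding S1_def by auto
  have du: "ds_dist S u \<noteq> None" using assms(1) u unfolding inv0_def by auto
  have H: "\<forall>v. v \<noteq> s \<and> ds_dist S v \<noteq> None \<longrightarrow> (\<exists>p. (p, v) \<in> E \<and> p \<noteq> v \<and> ds_dist S p \<noteq> None \<and>
                  p \<notin> ds_heap S \<and> (p = s \<or> ds_pop S p \<le> ds_push S v))" using assms(1) unfolding inv0_def by blast
  have H2: "\<forall>v. v \<noteq> s \<and> ds_dist S v \<noteq> None \<longrightarrow> (\<exists>p. (p, v) \<in> E \<and> p \<noteq> v \<and> ds_dist S p \<noteq> None \<and>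
                  p \<notin> ds_heap S - {u} \<and> (p = s \<or> ((ds_pop S)(u := ds_time S)) p \<le> ds_push S v))"
  proof (intro allI impI)
    fix v assume v: "v \<noteq> s \<and> ds_dist S v \<noteq> None"
    then obtain p where p: "(p, v) \<in> E \<and> p \<noteq> v \<and> ds_dist S p \<noteq> None \<and>
                  p \<notin> ds_heap S \<and> (p = s \<or> ds_pop S p \<le> ds_push S v)" using H by blast
    then have "p \<noteq> u" using u by auto
    then show "\<exists>p. (p, v) \<in> E \<and> p \<noteq> v \<and> ds_dist S p \<noteq> None \<and>
                  p \<notin> ds_heap S - {u} \<and> (p = s \<or> ((ds_pop S)(u := ds_time S)) p \<le> ds_push S v)"
      using p by (intro exI[of _ p]) auto
  qed
  have I1: "inv0 E s {u} S1"
    using assms(1) u H2 unfolding inv0_def F by blast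
  have A: "set (adj u) \<subseteq> {v. (u,v)\<in>E}" using assms(3) unfolding valid_adj_def by auto
  have R: "inv0 E s {u} S' \<and> (\<forall>v\<in>set (adj u). ds_dist S' v \<noteq> None)"
    using fold_inv[OF I1 A, of w] du F unfolding S' S1_def[symmetric] by auto
  have Ad: "\<And>y. (u,y) \<in> E \<Longrightarrow> y \<in> set (adj u)" using assms(3) unfolding valid_adj_def by auto
  show ?thesis using R Ad unfolding inv0_def by blast
qed

lemma reach_inv:
  assumes "(dijkstra_step w adj)\<^sup>*\<^sup>* (dijkstra_init s) S" "valid_adj E adj"
  shows "inv0 E s {} S"
  using assms(1)
proof (induction rule: rtranclp_induct)
  case base
  then show ?case unfolding inv0_def dijkstra_init_def by auto
next
  case (step y z)
  then show ?case using step_inv[OF step.IH step.hyps(2) assms(2)] by blast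
qed

lemma all_reached:
  assumes "inv0 E s {} S" "ds_heap S = {}" "(s, v) \<in> E\<^sup>*"
  shows "ds_dist S v \<noteq> None"
  using assms(3)
proof (induction rule: rtrancl_induct)
  case base
  then show ?case using assms(1) unfolding inv0_def by auto
next
  case (step y z)
  then show ?case using assms(1,2) unfolding inv0_def by blast
qed

lemma inv0_pred:
  assumes "inv0 E s X S" "v \<noteq> s" "ds_dist S v \<noteq> None"
  shows "\<exists>p. (p,v)\<in>E \<and> p\<noteq>v \<and> (p = s \<or> ds_pop S p \<le> ds_push S v)"
proof -
  have "\<forall>v. v\<noteq>s \<and> ds_dist S v \<noteq> None \<longrightarrow> (\<exists>p. (p,v)\<in>E \<and> p\<noteq>v \<and> ds_dist S p \<noteq> None \<and> p \<notin> ds_heap S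
      \<and> (p = s \<or> ds_pop S p \<le> ds_push S v))" using assms(1) unfolding inv0_def by (elim conjE)
  then show ?thesis using assms(2,3) by blast
qed

lemma inv0_push:
  assumes "inv0 E s X S" "v \<noteq> s" "ds_dist S v \<noteq> None"
  shows "1 \<le> ds_push S v"
proof -
  have "\<forall>v. v\<noteq>s \<and> ds_dist S v \<noteq> None \<longrightarrow> 1 \<le> ds_push S v" using assms(1) unfolding inv0_def by (elim conjE)
  then show ?thesis using assms(2,3) by blast
qed

lemma ww_single[simp]: "walk_weight w [a] = 0"
  unfolding walk_weight_def by simp

lemma ww_cons2[simp]: "walk_weight w (a # b # rest) = w a b + walk_weight w (b # rest)"
  unfolding walk_weight_def by simp

lemma ww_snoc: "q \<noteq> [] \<Longrightarrow> walk_weight w (q @ [x]) = walk_weight w q + w (last q) x"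
proof (induction q rule: induct_list012)
  case 1 then show ?case by simp
next
  case (2 a) then show ?case by simp
next
  case (3 a b zs) then show ?case by simp
qed

lemma ww_lower:
  assumes "\<forall>a b. d b - d a \<le> w a b"
  shows "p \<noteq> [] \<Longrightarrow> d (last p) - d (hd p) \<le> walk_weight w p"
proof (induction p rule: induct_list012)
  case 1 then show ?case by simp
next
  case (2 a) then show ?case by simp
next
  case (3 a b zs)
  have "d (last (b # zs)) - d b \<le> walk_weight w (b # zs)" using 3 by simp
  moreover have "d b - d a \<le> w a b" using assms by blast
  ultimately show ?case by simp
qed

lemma path_exists:
  fixes d :: "'v \<Rightarrow> real"
  assumes "finite V" "s \<in> V" "d s = 0" "\<forall>x\<in>V-{s}. \<exists>p\<in>V. (p,x)\<in>E \<and> d p < d x"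
    "\<forall>a b. d a < d b \<longrightarrow> w' a b = d b - d a"
  shows "x \<in> V \<Longrightarrow> \<exists>p. walk E p \<and> hd p = s \<and> last p = x \<and> walk_weight w' p = d x"
proof (induction "card {y\<in>V. d y < d x}" arbitrary: x rule: less_induct)
  case less
  show ?case
  proof (cases "x = s")
    case True
    then show ?thesis using assms(3) by (intro exI[of _ "[s]"]) (auto simp: walk_def)
  next
    case False
    then obtain p where p: "p \<in> V" "(p,x)\<in>E" "d p < d x" using assms(4) less.prems by blast
    have "{y\<in>V. d y < d p} \<subset> {y\<in>V. d y < d x}" using p by auto
    then have "card {y\<in>V. d y < d p} < card {y\<in>V. d y < d x}"
      using assms(1) by (intro psubset_card_mono) auto
    then obtain q where q: "walk E q" "hd q = s" "last q = p" "walk_weight w' q = d p"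
      using less.hyps p(1) by blast
    have qn: "q \<noteq> []" using q(1) unfolding walk_def by simp
    show ?thesis
    proof (intro exI[of _ "q @ [x]"] conjI)
      show "walk E (q @ [x])" using q qn p unfolding walk_def by (simp add: successively_append_iff)
      show "hd (q @ [x]) = s" using q qn by simp
      show "last (q @ [x]) = x" by simp
      show "walk_weight w' (q @ [x]) = d x" using ww_snoc[OF qn] q p assms(5) by simp
    qed
  qed
qed

theorem lemma7:
  fixes V :: "'v set" and E :: "('v \<times> 'v) set" and w :: "'v \<Rightarrow> 'v \<Rightarrow> real"
    and s :: 'v and adj :: "'v \<Rightarrow> 'v list" and S :: "'v dstate"
    and r :: "'v \<Rightarrow> real" and L :: "'v list"
  assumes "finite V" and "E \<subseteq> V \<times> V" and "s \<in> V"
    and "\<forall>(u, v) \<in> E. 0 < w u v"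
    and "\<forall>v \<in> V. (s, v) \<in> E\<^sup>*"
    and "inj_on (sp_dist E w s) V"
    and "valid_adj E adj"
    and "(dijkstra_step w adj)\<^sup>*\<^sup>* (dijkstra_init s) S" and "ds_heap S = {}"
    and "\<forall>x \<in> V - {s}. real (ds_push S x) \<le> r x \<and> r x \<le> real (ds_pop S x)"
    and "inj_on r (V - {s})"
    and "set L = V - {s}" and "distinct L" and "sorted_wrt (\<lambda>x y. r x < r y) L"
  shows "is_linearization V E s L"
proof -
  have I: "inv0 E s {} S" using reach_inv[OF assms(8,7)] .
  have D: "\<forall>x\<in>V. ds_dist S x \<noteq> None" using all_reached[OF I assms(9)] assms(5) by blast
  define d where "d x = (if x = s then 0 else r x)" for x
  have pred: "\<forall>x\<in>V-{s}. \<exists>p\<in>V. (p,x)\<in>E \<and> d p < d x"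
  proof
    fix x assume x: "x \<in> V - {s}"
    then obtain p where p: "(p, x) \<in> E" "p \<noteq> x" "p = s \<or> ds_pop S p \<le> ds_push S x"
      using inv0_pred[OF I] D x by blast
    have pV: "p \<in> V" using p(1) assms(2) by auto
    have push1: "1 \<le> ds_push S x" using inv0_push[OF I] D x by blast
    have "d p < d x"
    proof (cases "p = s")
      case True
      have "real (ds_push S x) \<le> r x" using assms(10) x by blast
      then show ?thesis using x push1 True unfolding d_def by simp
    next
      case False
      then have le: "ds_pop S p \<le> ds_push S x" using p(3) by blast
      have "r p \<le> real (ds_pop S p)" using assms(10) pV False by blast
      moreover have "real (ds_push S x) \<le> r x" using assms(10) x by blast
      ultimately have "r p \<le> r x" using le by linarith
      moreover have "r p \<noteq> r x" using assms(11) x pV False p(2) unfolding inj_on_def by blast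
      ultimately show ?thesis using False x unfolding d_def by auto
    qed
    then show "\<exists>p\<in>V. (p,x)\<in>E \<and> d p < d x" using pV p(1) by blast
  qed
  define w' where "w' a b = (if d a < d b then d b - d a else 1)" for a b
  have wpos: "\<forall>a b. 0 < w' a b" unfolding w'_def by auto
  have wlow: "\<forall>a b. d b - d a \<le> w' a b" unfolding w'_def by auto
  have sp: "sp_dist E w' s x = d x" if x: "x \<in> V" for x
  proof -
    obtain p where p: "walk E p" "hd p = s" "last p = x" "walk_weight w' p = d x"
      using path_exists[OF assms(1,3), of d E w' x] d_def pred x unfolding w'_def by auto
    show ?thesis unfolding sp_dist_def
    proof (rule cInf_eq_minimum)
      show "d x \<in> {walk_weight w' p |p. walk E p \<and> hd p = s \<and> last p = x}" using p by (intro CollectI exI[of _ p]) simp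
    next
      fix y assume "y \<in> {walk_weight w' p |p. walk E p \<and> hd p = s \<and> last p = x}"
      then obtain q where q: "y = walk_weight w' q" "walk E q" "hd q = s" "last q = x" by blast
      have "q \<noteq> []" using q(2) unfolding walk_def by simp
      then have "d (last q) - d (hd q) \<le> walk_weight w' q" using ww_lower[OF wlow] by blast
      then show "d x \<le> y" using q d_def by simp
    qed
  qed
  show ?thesis unfolding is_linearization_def
  proof (intro conjI exI[of _ w'])
    show "set L = V - {s}" "distinct L" using assms by auto
    show "\<forall>(u, v)\<in>E. 0 < w' u v" using wpos by auto
    show "sorted_wrt (\<lambda>x y. sp_dist E w' s x < sp_dist E w' s y) L"
      using assms(14)
    proof (rule sorted_wrt_mono_rel[rotated])
      fix x y assume "x \<in> set L" "y \<in> set L" "r x < r y"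
      moreover have "x \<in> V - {s}" "y \<in> V - {s}" using assms(12) \<open>x \<in> set L\<close> \<open>y \<in> set L\<close> by auto
      ultimately show "sp_dist E w' s x < sp_dist E w' s y" using sp d_def by simp
    qed
  qed
qed

end
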